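(* Let $A$ be a finite multiset of $n$ points in $\mathbb{R}^d$ with mean $\mu$, $\varepsilon>0$ and $\gamma>0$. Let $P\subset\mathbb{R}^d$ be a finite multiset of points (means) such that at least $\frac{7}{10}|P|$ of them are $\gamma$-good. Then the point returned by $\textsc{ComputeWinner}(P)$ is $5\gamma$-good.
   Context: $\mu=\frac1n\sum_{p\in A}p$, $\mathrm{Opt}=\sum_{p\in A}\|p-\mu\|^2$. A point $x$ is $\gamma$-good if $\|x-\mu\|\le\gamma\sqrt{\frac{\varepsilon\,\mathrm{Opt}}{n}}$. $\textsc{ComputeWinner}(P)$: for each $p_j\in P$ let $\rho_j$ be the distance from $p_j$ to its $\lceil\frac{7}{10}|P|\rceil$-th closest point of $P$, and $D_j=\sum_{p\in P,\ \|p-p_j\|\le\rho_j}\|p-p_j\|$; output a $p_j$ minimizing $D_j$. *)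

theory Defs
  imports "HOL-Analysis.Analysis"
begin

text \<open>Finite multisets of points are represented as lists (order irrelevant,
  multiplicities kept). Points live in an arbitrary Euclidean space.\<close>

definition mean :: "'a::euclidean_space list \<Rightarrow> 'a" where
  "mean A = (1 / real (length A)) *\<^sub>R sum_list A"

definition Opt :: "'a::euclidean_space list \<Rightarrow> real" where
  "Opt A = sum_list (map (\<lambda>p. (norm (p - mean A))\<^sup>2) A)"

definition good :: "'a::euclidean_space list \<Rightarrow> real \<Rightarrow> real \<Rightarrow> 'a \<Rightarrow> bool" where
  "good A \<epsilon> \<gamma> x \<longleftrightarrow> norm (x - mean A) \<le> \<gamma> * sqrt (\<epsilon> * Opt A / real (length A))"

text \<open>rho P j: distance from P!j to its ceil(7/10 |P|)-th closest point of P
  (counted with multiplicity, P!j itself included).\<close>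
definition rho :: "'a::euclidean_space list \<Rightarrow> nat \<Rightarrow> real" where
  "rho P j = sort (map (\<lambda>p. dist p (P ! j)) P) ! (nat \<lceil>7 / 10 * real (length P)\<rceil> - 1)"

definition Dval :: "'a::euclidean_space list \<Rightarrow> nat \<Rightarrow> real" where
  "Dval P j = sum_list (map (\<lambda>p. if dist p (P ! j) \<le> rho P j then dist p (P ! j) else 0) P)"

text \<open>j is a possible output index of ComputeWinner(P): it minimizes D_j.\<close>
definition is_winner :: "'a::euclidean_space list \<Rightarrow> nat \<Rightarrow> bool" where
  "is_winner P j \<longleftrightarrow> j < length P \<and> (\<forall>i < length P. Dval P j \<le> Dval P i)"

end

theory Submission
  imports Defs
begin

lemma cs_sum:
  fixes f :: "'b \<Rightarrow> real"
  assumes "finite A"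
  shows "(sum f A)^2 \<le> real (card A) * sum (\<lambda>a. (f a)^2) A"
proof -
  have "0 \<le> (\<Sum>a\<in>A. \<Sum>b\<in>A. (f a - f b)^2)" by (intro sum_nonneg) auto
  also have "\<dots> = (\<Sum>a\<in>A. \<Sum>b\<in>A. (f a)^2 + (f b)^2 - 2 * f a * f b)"
    by (simp add: power2_diff)
  also have "\<dots> = 2 * real (card A) * sum (\<lambda>a. (f a)^2) A - 2 * (sum f A)^2"
    by (simp add: sum.distrib sum_subtractf sum_distrib_left sum_distrib_right power2_eq_square mult.assoc sum.swap[of "\<lambda>a b. f b * f b"]) (simp add: mult.commute)
  finally show ?thesis by simp
qed

lemma pair_sq:
  fixes y :: "nat \<Rightarrow> 'a::euclidean_space"
  assumes "finite G"
  shows "(\<Sum>i\<in>G. \<Sum>k\<in>G. (norm (y i - y k))^2) \<le> 2 * real (card G) * (\<Sum>i\<in>G. (norm (y i))^2)"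
proof -
  have e: "(norm (y i - y k))^2 = (norm (y i))^2 + (norm (y k))^2 - 2 * (y i \<bullet> y k)" for i k
    by (simp add: power2_norm_eq_inner inner_diff_left inner_diff_right inner_commute)
  have "(\<Sum>i\<in>G. \<Sum>k\<in>G. y i \<bullet> y k) = (sum y G) \<bullet> (sum y G)"
    by (simp add: inner_sum_left inner_sum_right) (rule sum.swap)
  also have "\<dots> \<ge> 0" by simp
  finally have nn: "(\<Sum>i\<in>G. \<Sum>k\<in>G. y i \<bullet> y k) \<ge> 0" .
  have "(\<Sum>i\<in>G. \<Sum>k\<in>G. (norm (y i - y k))^2) = 2 * real (card G) * (\<Sum>i\<in>G. (norm (y i))^2) - 2 * (\<Sum>i\<in>G. \<Sum>k\<in>G. y i \<bullet> y k)"
    by (simp add: e sum.distrib sum_subtractf sum_distrib_left sum_distrib_right sum.swap[of "\<lambda>i k. (norm (y k))^2"]) (simp add: inner_commute mult.assoc)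
  with nn show ?thesis by linarith
qed

lemma os_a:
  fixes xs :: "real list"
  assumes "1 \<le> m" "m \<le> length xs"
  shows "m \<le> card {k. k < length xs \<and> xs ! k \<le> sort xs ! (m - 1)}"
proof -
  let ?s = "sort xs"
  have "length (filter (\<lambda>x. x \<le> ?s ! (m-1)) xs) = length (filter (\<lambda>x. x \<le> ?s ! (m-1)) ?s)"
    by (simp add: filter_sort)
  also have "\<dots> = card {k. k < length ?s \<and> ?s ! k \<le> ?s ! (m - 1)}"
    by (rule length_filter_conv_card)
  also have "\<dots> \<ge> card {..<m}"
  proof (rule card_mono)
    show "{..<m} \<subseteq> {k. k < length ?s \<and> ?s ! k \<le> ?s ! (m - 1)}"
      using assms by (auto intro: sorted_nth_mono)
  qed simp
  finally show ?thesis by (simp add: length_filter_conv_card)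
qed

lemma os_b:
  fixes xs :: "real list"
  assumes "1 \<le> m" "m \<le> length xs" "m \<le> card {k. k < length xs \<and> xs ! k \<le> T}"
  shows "sort xs ! (m - 1) \<le> T"
proof (rule ccontr)
  assume c: "\<not> ?thesis"
  let ?s = "sort xs"
  have "card {k. k < length xs \<and> xs ! k \<le> T} = length (filter (\<lambda>x. x \<le> T) xs)"
    by (simp add: length_filter_conv_card)
  also have "\<dots> = length (filter (\<lambda>x. x \<le> T) ?s)" by (simp add: filter_sort)
  also have "\<dots> = card {k. k < length ?s \<and> ?s ! k \<le> T}" by (rule length_filter_conv_card)
  also have "\<dots> \<le> card {..<m-1}"
  proof (rule card_mono)
    show "{k. k < length ?s \<and> ?s ! k \<le> T} \<subseteq> {..<m-1}"
    proof
      fix k assume k: "k \<in> {k. k < length ?s \<and> ?s ! k \<le> T}"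
      show "k \<in> {..<m-1}"
      proof (rule ccontr)
        assume "k \<notin> {..<m-1}"
        hence "?s ! (m-1) \<le> ?s ! k" using k by (auto intro: sorted_nth_mono)
        thus False using k c by auto
      qed
    qed
  qed simp
  finally show False using assms by simp
qed


theorem lemma4p4:
  fixes A P :: "'a::euclidean_space list" and \<epsilon> \<gamma> :: real and j :: nat
  assumes "A \<noteq> []"
    and "\<epsilon> > 0" and "\<gamma> > 0"
    and "real (card {i. i < length P \<and> good A \<epsilon> \<gamma> (P ! i)}) \<ge> 7 / 10 * real (length P)"
    and "is_winner P j"
  shows "good A \<epsilon> (5 * \<gamma>) (P ! j)"
proof (rule ccontr)
  assume notgood: "\<not> good A \<epsilon> (5 * \<gamma>) (P ! j)"
  define N where "N = length P"
  define x where "x = (\<lambda>k. P ! k)"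
  define \<mu> where "\<mu> = mean A"
  define R where "R = \<gamma> * sqrt (\<epsilon> * Opt A / real (length A))"
  define m where "m = nat \<lceil>7 / 10 * real N\<rceil>"
  define G where "G = {i. i < length P \<and> good A \<epsilon> \<gamma> (P ! i)}"
  define g where "g = card G"
  have jN: "j < N" and jmin: "\<And>i. i < N \<Longrightarrow> Dval P j \<le> Dval P i"
    using assms(5) by (auto simp: is_winner_def N_def)
  have Npos: "N > 0" using jN by simp
  have "Opt A \<ge> 0" unfolding Opt_def by (intro sum_list_nonneg) auto
  hence R0: "R \<ge> 0" unfolding R_def using assms(2,3) by simp
  have goodiff: "good A \<epsilon> c z \<longleftrightarrow> norm (z - \<mu>) \<le> c * sqrt (\<epsilon> * Opt A / real (length A))" for c z
    by (simp add: good_def \<mu>_def)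
  have far: "norm (x j - \<mu>) > 5 * R" using notgood by (simp add: goodiff R_def x_def)
  have G_def': "G = {i. i < N \<and> norm (x i - \<mu>) \<le> R}"
    by (simp add: G_def N_def x_def goodiff R_def)
  have finG: "finite G" and GN: "G \<subseteq> {..<N}" by (auto simp: G_def')
  have gN: "g \<le> N" using card_mono[OF _ GN] by (simp add: g_def)
  have g7: "real g \<ge> 7/10 * real N" using assms(4) by (simp add: g_def G_def N_def)
  have m7: "real m \<ge> 7/10 * real N" unfolding m_def by linarith
  have "\<lceil>7 / 10 * real N\<rceil> \<le> int g" by (rule ceiling_le) (use g7 in simp)
  hence mg: "m \<le> g" unfolding m_def by linarith
  have "\<lceil>7 / 10 * real N\<rceil> \<le> int N" by (rule ceiling_le) simp
  hence mN: "m \<le> N" unfolding m_def by linarith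
  have "real N > 0" using Npos by simp
  hence "real m > 0" using m7 by linarith
  hence m1: "1 \<le> m" by simp
  have gpos: "g > 0" using m1 mg by simp
  have Gi: "\<And>i. i \<in> G \<Longrightarrow> norm (x i - \<mu>) \<le> R \<and> i < N" by (simp add: G_def')
  have rho_eq: "rho P i = sort (map (\<lambda>p. dist p (x i)) P) ! (m - 1)" for i
    by (simp add: rho_def m_def N_def x_def)
  define fD where "fD = (\<lambda>i k. if dist (x k) (x i) \<le> rho P i then dist (x k) (x i) else 0)"
  have Dsum: "Dval P i = (\<Sum>k<N. fD i k)" for i
    unfolding fD_def x_def N_def by (simp add: Dval_def sum_list_sum_nth atLeast0LessThan)
  have fD0: "0 \<le> fD i k" for i k by (simp add: fD_def)
  have fDd: "fD i k \<le> dist (x k) (x i)" for i k by (simp add: fD_def)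
  have rhoG: "rho P i \<le> 2 * R" if iG: "i \<in> G" for i
  proof -
    let ?xs = "map (\<lambda>p. dist p (x i)) P"
    have "G \<subseteq> {k. k < length ?xs \<and> ?xs ! k \<le> 2 * R}"
    proof
      fix k assume kG: "k \<in> G"
      have "dist (x k) (x i) \<le> norm (x k - \<mu>) + norm (x i - \<mu>)"
        by (metis dist_commute dist_norm dist_triangle)
      thus "k \<in> {k. k < length ?xs \<and> ?xs ! k \<le> 2 * R}"
        using Gi[OF kG] Gi[OF iG] by (simp add: N_def x_def)
    qed
    hence "g \<le> card {k. k < length ?xs \<and> ?xs ! k \<le> 2 * R}"
      unfolding g_def by (intro card_mono) auto
    hence "sort ?xs ! (m - 1) \<le> 2 * R"
      using mg m1 mN by (intro os_b) (auto simp: N_def)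
    thus ?thesis by (simp add: rho_eq)
  qed
  have Dup: "Dval P i \<le> (\<Sum>k\<in>G. dist (x k) (x i)) + real (N - g) * (2 * R)" if iG: "i \<in> G" for i
  proof -
    have "Dval P i = (\<Sum>k\<in>G. fD i k) + (\<Sum>k\<in>{..<N} - G. fD i k)"
      unfolding Dsum using sum.subset_diff[OF GN, of "fD i"] by simp
    also have "(\<Sum>k\<in>G. fD i k) \<le> (\<Sum>k\<in>G. dist (x k) (x i))" by (intro sum_mono fDd)
    also have "(\<Sum>k\<in>{..<N} - G. fD i k) \<le> real (card ({..<N} - G)) * (2 * R)"
    proof (rule sum_bounded_above)
      fix k show "fD i k \<le> 2 * R" using rhoG[OF iG] R0 by (simp add: fD_def)
    qed
    also have "card ({..<N} - G) = N - g" using GN finG by (simp add: card_Diff_subset g_def)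
    finally show ?thesis by simp
  qed
  define S where "S = (\<Sum>i\<in>G. \<Sum>k\<in>G. dist (x k) (x i))"
  have "real g * Dval P j = (\<Sum>i\<in>G. Dval P j)" by (simp add: g_def)
  also have "\<dots> \<le> (\<Sum>i\<in>G. (\<Sum>k\<in>G. dist (x k) (x i)) + real (N - g) * (2 * R))"
    by (intro sum_mono order.trans[OF jmin Dup]) (auto dest: Gi)
  also have "\<dots> = S + real g * (real (N - g) * (2 * R))" by (simp add: S_def sum.distrib g_def)
  finally have upper: "real g * Dval P j \<le> S + real g * (real (N - g) * (2 * R))" .
  define y where "y = (\<lambda>k. x k - \<mu>)"
  have S0: "S \<ge> 0" unfolding S_def by (intro sum_nonneg) auto
  have "S = (\<Sum>(i,k)\<in>G \<times> G. dist (x k) (x i))" unfolding S_def by (simp add: sum.cartesian_product)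
  hence "S^2 \<le> real (card (G \<times> G)) * (\<Sum>(i,k)\<in>G \<times> G. (dist (x k) (x i))^2)"
    using cs_sum[of "G \<times> G" "\<lambda>(i,k). dist (x k) (x i)"] finG by (simp add: case_prod_beta)
  also have "(\<Sum>(i,k)\<in>G \<times> G. (dist (x k) (x i))^2) = (\<Sum>i\<in>G. \<Sum>k\<in>G. (norm (y i - y k))^2)"
    by (simp add: sum.cartesian_product[symmetric] y_def dist_norm norm_minus_commute)
  also have "\<dots> \<le> 2 * real g * (\<Sum>i\<in>G. (norm (y i))^2)"
    using pair_sq[OF finG, of y] by (simp add: g_def)
  also have "(\<Sum>i\<in>G. (norm (y i))^2) \<le> (\<Sum>i\<in>G. R^2)"
    by (intro sum_mono power_mono) (auto simp: y_def dest: Gi)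
  also have "(\<Sum>i\<in>G. R^2) = real g * R^2" by (simp add: g_def)
  finally have S2: "S^2 \<le> real g^2 * (2 * real g * (real g * R^2))"
    by (simp add: card_cartesian_product g_def power2_eq_square mult_left_mono)
  define K where "K = 4 * real m + 6 * real g - 6 * real N"
  have K1: "K \<ge> 142/100 * real g" unfolding K_def using m7 g7 gN by simp
  hence "K * K \<ge> (142/100 * real g) * (142/100 * real g)" by (intro mult_mono) auto
  moreover have "0 \<le> real g * real g" by simp
  ultimately have K2: "K^2 \<ge> 2 * real g^2" unfolding power2_eq_square by linarith
  have "S^2 \<le> (real g * R * K)^2"
  proof -
    have eq: "real g^2 * (2 * real g * (real g * R^2)) = (real g^2 * R^2) * (2 * real g^2)"
      by (simp add: power2_eq_square mult_ac)
    have "S^2 \<le> (real g^2 * R^2) * (2 * real g^2)" using S2 by (simp only: eq)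
    also have "\<dots> \<le> (real g^2 * R^2) * K^2" by (intro mult_left_mono K2) auto
    finally show ?thesis by (simp add: power_mult_distrib)
  qed
  moreover have "0 \<le> real g * R * K" using K1 R0 by simp
  ultimately have Sb: "S \<le> real g * R * K" by (rule power2_le_imp_le)
  define B where "B = {k. k < N \<and> dist (x k) (x j) \<le> rho P j}"
  have "m \<le> card {k. k < length (map (\<lambda>p. dist p (x j)) P) \<and> map (\<lambda>p. dist p (x j)) P ! k \<le> sort (map (\<lambda>p. dist p (x j)) P) ! (m - 1)}"
    using m1 mN by (intro os_a) (auto simp: N_def)
  moreover have "{k. k < length (map (\<lambda>p. dist p (x j)) P) \<and> map (\<lambda>p. dist p (x j)) P ! k \<le> sort (map (\<lambda>p. dist p (x j)) P) ! (m - 1)} = B"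
    by (auto simp: B_def rho_eq N_def x_def)
  ultimately have mB: "m \<le> card B" by simp
  have finB: "finite B" and BN: "B \<subseteq> {..<N}" by (auto simp: B_def)
  have "card (B \<union> G) \<le> N" using card_mono[of "{..<N}" "B \<union> G"] BN GN by auto
  moreover have "card (B \<union> G) + card (B \<inter> G) = card B + card G" using card_Un_Int[OF finB finG] by simp
  ultimately have BG: "real (card (B \<inter> G)) \<ge> real m + real g - real N" using mB unfolding g_def by linarith
  have BGpos: "B \<inter> G \<noteq> {}"
  proof
    assume "B \<inter> G = {}"
    with BG m7 g7 Npos show False by simp
  qed
  have "real (card (B \<inter> G)) * (4 * R) = (\<Sum>k\<in>B \<inter> G. 4 * R)" by simp
  also have "\<dots> < (\<Sum>k\<in>B \<inter> G. dist (x k) (x j))"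
  proof (rule sum_strict_mono)
    fix k assume k: "k \<in> B \<inter> G"
    have "norm (x j - \<mu>) \<le> dist (x k) (x j) + norm (x k - \<mu>)"
      by (metis dist_commute dist_norm dist_triangle)
    thus "4 * R < dist (x k) (x j)" using far Gi[of k] k by auto
  qed (use finB BGpos in auto)
  also have "\<dots> = (\<Sum>k\<in>B \<inter> G. fD j k)" by (intro sum.cong) (auto simp: fD_def B_def)
  also have "\<dots> \<le> (\<Sum>k<N. fD j k)" by (intro sum_mono2) (use BN fD0 in auto)
  also have "\<dots> = Dval P j" by (simp add: Dsum)
  finally have lower: "real (card (B \<inter> G)) * (4 * R) < Dval P j" .
  have "(real m + real g - real N) * (4 * R) \<le> real (card (B \<inter> G)) * (4 * R)"
    using BG R0 by (intro mult_right_mono) auto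
  with lower have low2: "(real m + real g - real N) * (4 * R) < Dval P j" by linarith
  have "real g * Dval P j \<le> real g * R * K + real g * (real (N - g) * (2 * R))" using upper Sb by linarith
  also have "\<dots> = real g * ((real m + real g - real N) * (4 * R))"
    using gN by (simp add: K_def of_nat_diff algebra_simps)
  finally have "Dval P j \<le> (real m + real g - real N) * (4 * R)" using gpos by simp
  with low2 show False by linarith
qed

end
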